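(* Let $\theta_0\in\,]0,\pi/2[$, $\ell,\kappa,\rho>0$. Let $\widehat\zeta:\,]-\infty,0]\to\mathbb R$ be the solution of the backward Cauchy problem $$\zeta'(t)=-\frac{\rho\kappa}{\sin\Big(\varphi\big((e^{-\kappa}-1)e^{\zeta(t)}\big)\Big)},\qquad \zeta(0)=0,$$ and set $\widehat\theta(t)=\varphi\big((e^{-\kappa}-1)e^{\widehat\zeta(t)}\big)$ for $t\le0$. Let $\bar h>0$ be the number such that $\int_{-\bar h}^0\frac{dt}{\sin\widehat\theta(t)}=\ell$. If $(I^*,(h^*,\theta^* ))$ is a competitive equilibrium, then $h^*=\bar h$ and $\theta^*(y)=\widehat\theta(y-\bar h)$ for a.e. $y\in[0,\bar h]$. In particular there is at most one competitive equilibrium.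
   Context: Model 1. For $\theta\in[\theta_0,\pi/2]$ define $G(\theta)=\Big(1-\exp\Big\{\frac{-\kappa}{\cos(\theta-\theta_0)}\Big\}\Big)\cos(\theta-\theta_0)$ and $g(\theta)=G(\theta)/\sin\theta$. The function $\varphi:\,]-\infty,e^{-\kappa}-1]\to[\theta_0,\pi/2[$ is defined by: $\varphi(z)$ is the unique $\theta\in[\theta_0,\pi/2[$ with $G'(\theta)\tan\theta-G(\theta)=z$. Given a non-decreasing $I:[0,\infty)\to[0,1]$, problem (OP1) is: among all pairs $(h,\theta)$ with $h>0$, $\theta:[0,h]\to[\theta_0,\pi/2]$ measurable and $\int_0^h \frac{dy}{\sin\theta(y)}=\ell$, maximize $\int_0^h I(y)\,g(\theta(y))\,dy$. Competitive equilibrium: $I^*:[0,\infty)\to[0,1]$ and $(h^*,\theta^* )$, $\theta^*:[0,h^*]\to[\theta_0,\pi/2]$, such that (i) $(h^*,\theta^* )$ is optimal for (OP1) with $I=I^*$, and (ii) $I^*(y)=\exp\Big\{-\rho\int_{\min\{y,h^*\}}^{h^*}\frac{\kappa}{\sin\theta^*(\eta)}\,d\eta\Big\}$ for all $y\ge0$. *)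

theory Defs
  imports "HOL-Analysis.Analysis"
begin

definition G :: "real \<Rightarrow> real \<Rightarrow> real \<Rightarrow> real" where
  "G \<theta>0 \<kappa> \<theta> = (1 - exp (- \<kappa> / cos (\<theta> - \<theta>0))) * cos (\<theta> - \<theta>0)"

definition g :: "real \<Rightarrow> real \<Rightarrow> real \<Rightarrow> real" where
  "g \<theta>0 \<kappa> \<theta> = G \<theta>0 \<kappa> \<theta> / sin \<theta>"

text \<open>phi z is the unique theta in [theta0, pi/2) with G'(theta) tan theta - G(theta) = z,
  for z <= exp(-kappa) - 1.\<close>
definition phi :: "real \<Rightarrow> real \<Rightarrow> real \<Rightarrow> real" where
  "phi \<theta>0 \<kappa> z = (THE \<theta>. \<theta> \<in> {\<theta>0..<pi/2} \<and>
      deriv (G \<theta>0 \<kappa>) \<theta> * tan \<theta> - G \<theta>0 \<kappa> \<theta> = z)"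

definition OP1_feasible :: "real \<Rightarrow> real \<Rightarrow> real \<Rightarrow> (real \<Rightarrow> real) \<Rightarrow> bool" where
  "OP1_feasible \<theta>0 L h \<theta> \<longleftrightarrow>
     h > 0 \<and> \<theta> \<in> borel_measurable (lebesgue_on {0..h}) \<and>
     (\<forall>y\<in>{0..h}. \<theta> y \<in> {\<theta>0..pi/2}) \<and>
     (\<lambda>y. 1 / sin (\<theta> y)) integrable_on {0..h} \<and>
     integral {0..h} (\<lambda>y. 1 / sin (\<theta> y)) = L"

definition OP1_value :: "real \<Rightarrow> real \<Rightarrow> (real \<Rightarrow> real) \<Rightarrow> real \<Rightarrow> (real \<Rightarrow> real) \<Rightarrow> real" where
  "OP1_value \<theta>0 \<kappa> I h \<theta> = integral {0..h} (\<lambda>y. I y * g \<theta>0 \<kappa> (\<theta> y))"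

definition OP1_optimal ::
  "real \<Rightarrow> real \<Rightarrow> real \<Rightarrow> (real \<Rightarrow> real) \<Rightarrow> real \<Rightarrow> (real \<Rightarrow> real) \<Rightarrow> bool" where
  "OP1_optimal \<theta>0 L \<kappa> I h \<theta> \<longleftrightarrow>
     OP1_feasible \<theta>0 L h \<theta> \<and>
     (\<forall>h' \<theta>'. OP1_feasible \<theta>0 L h' \<theta>' \<longrightarrow>
        OP1_value \<theta>0 \<kappa> I h' \<theta>' \<le> OP1_value \<theta>0 \<kappa> I h \<theta>)"

definition competitive_equilibrium ::
  "real \<Rightarrow> real \<Rightarrow> real \<Rightarrow> real \<Rightarrow> (real \<Rightarrow> real) \<Rightarrow> real \<Rightarrow> (real \<Rightarrow> real) \<Rightarrow> bool" where
  "competitive_equilibrium \<theta>0 L \<kappa> \<rho> I h \<theta> \<longleftrightarrow>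
     (\<forall>y\<ge>0. I y \<in> {0..1}) \<and>
     OP1_optimal \<theta>0 L \<kappa> I h \<theta> \<and>
     (\<forall>y\<ge>0. I y = exp (- \<rho> * integral {min y h..h} (\<lambda>\<eta>. \<kappa> / sin (\<theta> \<eta>))))"

end

theory Submission
  imports Defs
begin

lemma exp_gt_one_plus: fixes x :: real assumes "x \<noteq> 0" shows "1 + x < exp x"
proof (cases "1 + x/2 \<ge> 0")
  case False
  then have "1 + x < 0" by simp
  then show ?thesis using exp_gt_zero[of x] by linarith
next
  case True
  have "x*x > 0" by (metis assms not_real_square_gt_zero)
  have e: "exp x = exp (x/2) * exp (x/2)" by (simp flip: exp_add)
  have "1 + x/2 \<le> exp (x/2)" by (rule exp_ge_add_one_self)
  then have "(1 + x/2) * (1 + x/2) \<le> exp (x/2) * exp (x/2)"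
    using True by (intro mult_mono) auto
  moreover have "(1 + x/2) * (1 + x/2) = 1 + x + x*x/4" by (simp add: algebra_simps)
  ultimately show ?thesis using e \<open>x*x > 0\<close> by linarith
qed

locale GP =
  fixes t0 k :: real
  assumes t0: "0 < t0" "t0 < pi/2" and k: "0 < k"
begin

definition Af :: "real \<Rightarrow> real" where "Af c = 1 - exp (-k/c) - k/c * exp(-k/c)"
definition Ad :: "real \<Rightarrow> real" where "Ad c = - (k^2 / c^3) * exp(-k/c)"

lemma Af_deriv: "c > 0 \<Longrightarrow> (Af has_real_derivative Ad c) (at c)"
  unfolding Af_def Ad_def
  apply (rule derivative_eq_intros refl | simp)+
  apply (simp add: field_simps power2_eq_square power3_eq_cube)
  done

lemma Ad_neg: "c > 0 \<Longrightarrow> Ad c < 0"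
  unfolding Ad_def using k by simp

lemma Af_pos: assumes "c > 0" shows "Af c > 0"
proof -
  have x: "k/c > 0" using assms k by simp
  have "1 + k/c < exp (k/c)"
    using exp_gt_one_plus[of "k/c"] x assms k by simp
  then have "(1 + k/c) * exp (-k/c) < exp (k/c) * exp (-k/c)"
    by (rule mult_strict_right_mono) simp
  also have "exp (k/c) * exp (-k/c) = 1" by (simp flip: exp_add)
  finally have "(1 + k/c) * exp (-k/c) < 1" .
  moreover have "Af c = 1 - (1 + k/c) * exp (-k/c)" unfolding Af_def by (simp only: distrib_right mult_1_left diff_diff_eq)
  ultimately show ?thesis by linarith
qed

lemma Af_antimono: assumes "0 < c1" "c1 \<le> c2" shows "Af c2 \<le> Af c1"
  using DERIV_nonpos_imp_decreasing_open[of c1 c2 Af] assms Af_deriv Ad_neg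
  by (smt (verit) DERIV_isCont continuous_at_imp_continuous_on atLeastAtMost_iff)

lemma cos_pos: "t0 \<le> x \<Longrightarrow> x \<le> pi/2 \<Longrightarrow> cos (x - t0) > 0"
  using t0 by (intro cos_gt_zero_pi) auto

lemma G_deriv': "cos (x - t0) > 0 \<Longrightarrow> ((\<lambda>x. (1 - exp (-k / cos (x - t0))) * cos (x - t0)) has_real_derivative (- (1 - exp (-k/cos (x - t0)) - k/cos (x - t0) * exp(-k/cos (x - t0)))) * sin (x - t0)) (at x)"
  apply (rule derivative_eq_intros refl | simp)+
  apply (simp add: field_simps)
  done

lemma G_deriv: assumes "cos (x - t0) > 0"
  shows "(G t0 k has_real_derivative (- Af (cos (x - t0)) * sin (x - t0))) (at x)"
  using G_deriv'[OF assms] unfolding G_def[abs_def] Af_def by simp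

lemma deriv_G: "cos (x - t0) > 0 \<Longrightarrow> deriv (G t0 k) x = - Af (cos (x - t0)) * sin (x - t0)"
  using G_deriv DERIV_imp_deriv by blast

definition Z :: "real \<Rightarrow> real" where
  "Z x = - Af (cos (x - t0)) * sin (x - t0) * tan x - G t0 k x"

definition Zd :: "real \<Rightarrow> real" where
  "Zd x = Ad (cos (x - t0)) * (sin (x - t0))^2 * tan x - Af (cos (x - t0)) * cos (x - t0) * tan x
     - Af (cos (x - t0)) * sin (x - t0) * (tan x)^2"

lemma Z_eq: "x \<in> {t0..<pi/2} \<Longrightarrow> deriv (G t0 k) x * tan x - G t0 k x = Z x"
  using deriv_G cos_pos unfolding Z_def by auto

lemma Z_deriv: assumes "cos (x - t0) > 0" "cos x \<noteq> 0"
  shows "(Z has_real_derivative Zd x) (at x)"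
proof -
  have d1: "((\<lambda>x. Af (cos (x - t0))) has_real_derivative Ad (cos (x - t0)) * (- sin (x - t0) * 1)) (at x)"
    by (rule DERIV_chain2[where f=Af and g="\<lambda>x. cos(x-t0)", OF Af_deriv[OF assms(1)]]) (auto intro!: derivative_eq_intros)
  have tinv: "inverse ((cos x)\<^sup>2) = 1 + (tan x)^2"
    using assms(2) by (simp add: tan_def power2_eq_square divide_simps sin_squared_eq)
  have d2: "(tan has_real_derivative inverse((cos x)^2)) (at x)" using DERIV_tan assms(2) by blast
  show "(Z has_real_derivative Zd x) (at x)"
    unfolding Z_def
    apply (rule d1 d2 G_deriv[OF assms(1)] derivative_eq_intros refl)+
    apply (subst tinv)
    apply (simp add: Zd_def algebra_simps power2_eq_square)
    done
qed

lemma Zd_neg: assumes "t0 < x" "x < pi/2" shows "Zd x < 0"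
proof -
  have c: "cos (x - t0) > 0" using cos_pos assms by auto
  have s: "sin (x - t0) > 0" using assms t0 by (intro sin_gt_zero2) auto
  have tn: "tan x > 0" using assms t0 by (intro tan_gt_zero) auto
  have "Ad (cos (x - t0)) * (sin (x - t0))^2 * tan x < 0"
    using Ad_neg[OF c] s tn by (simp add: mult_neg_pos)
  moreover have "Af (cos (x - t0)) * cos (x - t0) * tan x > 0"
    using Af_pos[OF c] c tn by simp
  moreover have "Af (cos (x - t0)) * sin (x - t0) * (tan x)^2 > 0"
    using Af_pos[OF c] s tn by simp
  ultimately show ?thesis unfolding Zd_def by linarith
qed

lemma Z_deriv': assumes "t0 \<le> x" "x < pi/2" shows "(Z has_real_derivative Zd x) (at x)"
proof -
  have "cos x > 0" using assms t0 by (intro cos_gt_zero_pi) auto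
  then show ?thesis using assms by (intro Z_deriv cos_pos) auto
qed

lemma Z_cont: "b < pi/2 \<Longrightarrow> continuous_on {t0..b} Z"
  by (intro continuous_at_imp_continuous_on ballI DERIV_isCont[OF Z_deriv']) auto

lemma Z_strict: assumes "t0 \<le> a" "a < b" "b < pi/2" shows "Z b < Z a"
  using DERIV_neg_imp_decreasing_open[of a b Z] assms Z_deriv' Zd_neg
    continuous_on_subset[OF Z_cont[of b]]
  by (smt (verit, ccfv_SIG) atLeastatMost_subset_iff)

lemma Z_t0: "Z t0 = exp (-k) - 1"
  unfolding Z_def G_def by simp

lemma G_nonneg: assumes "t0 \<le> x" "x \<le> pi/2" shows "G t0 k x \<ge> 0"
proof -
  have c: "cos (x - t0) > 0" using cos_pos assms by auto
  have "exp (-k / cos (x - t0)) \<le> 1" using c k by simp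
  then show ?thesis unfolding G_def using c by simp
qed

lemma Z_unbounded: "\<exists>x\<in>{t0..<pi/2}. Z x \<le> z"
proof -
  define m where "m = (t0 + pi/2)/2"
  have m: "t0 < m" "m < pi/2" using t0 unfolding m_def by auto
  define K where "K = Af (cos (m - t0)) * sin (m - t0)"
  have cm: "cos (m - t0) > 0" using cos_pos m by auto
  have sm: "sin (m - t0) > 0" using m t0 by (intro sin_gt_zero2) auto
  have K: "K > 0" unfolding K_def using Af_pos[OF cm] sm by simp
  define y where "y = max (-z/K) (tan m)"
  define x where "x = arctan y"
  have xl: "x < pi/2" unfolding x_def by (rule arctan_ubound)
  have "arctan (tan m) = m" using m t0 by (intro arctan_tan) auto
  then have xm: "m \<le> x" unfolding x_def y_def by (metis arctan_monotone' max.cobounded2)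
  have tx: "tan x = y" unfolding x_def by (rule tan_arctan)
  have ty: "y > 0" unfolding y_def using m t0 tan_gt_zero[of m] by (simp add: less_max_iff_disj)
  have cx: "cos (x - t0) > 0" using cos_pos xm xl m by auto
  have "cos (x - t0) \<le> cos (m - t0)" using xm xl m t0 by (intro cos_monotone_0_pi_le) auto
  then have a: "Af (cos (x - t0)) \<ge> Af (cos (m - t0))" using Af_antimono cx by blast
  have b: "sin (x - t0) \<ge> sin (m - t0)" using xm xl m t0 by (intro sin_monotone_2pi_le) auto
  have "K \<le> Af (cos (x - t0)) * sin (x - t0)"
    unfolding K_def using a b Af_pos[OF cm] sm by (intro mult_mono) auto
  then have "K * y \<le> Af (cos (x - t0)) * sin (x - t0) * tan x"
    using ty tx by (simp add: mult_right_mono)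
  moreover have "- z \<le> K * y" using K unfolding y_def
    by (smt (verit, best) divide_le_eq max.cobounded1 mult.commute)
  moreover have "G t0 k x \<ge> 0" using G_nonneg xm xl m by auto
  ultimately have "Z x \<le> z" unfolding Z_def by linarith
  then show ?thesis using xm xl m by auto
qed


lemma Z_le: assumes "t0 \<le> x" "x < pi/2" shows "Z x \<le> exp (-k) - 1"
  using Z_strict[of t0 x] Z_t0 assms by (cases "x = t0") auto

lemma Z_inj: assumes "x \<in> {t0..<pi/2}" "y \<in> {t0..<pi/2}" "Z x = Z y" shows "x = y"
  using Z_strict[of x y] Z_strict[of y x] assms by (cases x y rule: linorder_cases) auto

lemma phi_ex: assumes "z \<le> exp (-k) - 1" shows "\<exists>x\<in>{t0..<pi/2}. Z x = z"
proof -
  obtain b where b: "b \<in> {t0..<pi/2}" "Z b \<le> z" using Z_unbounded by blast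
  have "\<exists>x. t0 \<le> x \<and> x \<le> b \<and> Z x = z"
    using b assms Z_t0 by (intro IVT2' Z_cont) auto
  then show ?thesis using b by auto
qed

lemma phi_prop: assumes "z \<le> exp (-k) - 1"
  shows "phi t0 k z \<in> {t0..<pi/2}" "Z (phi t0 k z) = z"
proof -
  have ex: "\<exists>!x. x \<in> {t0..<pi/2} \<and> deriv (G t0 k) x * tan x - G t0 k x = z"
    using phi_ex[OF assms] Z_eq Z_inj by metis
  have "phi t0 k z \<in> {t0..<pi/2} \<and> deriv (G t0 k) (phi t0 k z) * tan (phi t0 k z) - G t0 k (phi t0 k z) = z"
    unfolding phi_def by (rule theI'[OF ex])
  then show "phi t0 k z \<in> {t0..<pi/2}" "Z (phi t0 k z) = z" using Z_eq by auto
qed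

lemma phi_Z: assumes "x \<in> {t0..<pi/2}" shows "phi t0 k (Z x) = x"
  using phi_prop[of "Z x"] Z_le[of x] Z_inj[of "phi t0 k (Z x)" x] assms by auto

lemma phi_strict: assumes "z1 < z2" "z2 \<le> exp (-k) - 1" shows "phi t0 k z2 < phi t0 k z1"
proof -
  have p1: "phi t0 k z1 \<in> {t0..<pi/2}" "Z (phi t0 k z1) = z1" using phi_prop assms by auto
  have p2: "phi t0 k z2 \<in> {t0..<pi/2}" "Z (phi t0 k z2) = z2" using phi_prop assms by auto
  show ?thesis
  proof (rule ccontr)
    assume "\<not> ?thesis"
    then consider "phi t0 k z2 = phi t0 k z1" | "phi t0 k z1 < phi t0 k z2" by linarith
    then show False
    proof cases
      case 1 then show False using p1 p2 assms by auto
    next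
      case 2 then show False using Z_strict[of "phi t0 k z1" "phi t0 k z2"] p1 p2 assms by auto
    qed
  qed
qed

lemma phi_mono: assumes "z1 \<le> z2" "z2 \<le> exp (-k) - 1" shows "phi t0 k z2 \<le> phi t0 k z1"
  using phi_strict[of z1 z2] assms by (cases "z1 = z2") auto

lemma phi_zz: "phi t0 k (exp (-k) - 1) = t0"
  using phi_Z[of t0] Z_t0 t0 by auto

lemma phi_gt: "z < exp (-k) - 1 \<Longrightarrow> t0 < phi t0 k z"
  using phi_strict[of z "exp (-k) - 1"] phi_zz by auto

lemma phi_cont: assumes "a \<le> exp (-k) - 1" shows "continuous_on {a..exp (-k) - 1} (phi t0 k)"
proof -
  obtain b where b: "b \<in> {t0..<pi/2}" "Z b \<le> a" using Z_unbounded by blast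
  have c: "continuous_on (Z ` {t0..b}) (phi t0 k)"
    using b by (intro continuous_on_inv Z_cont) (auto intro!: phi_Z)
  have "{a..exp (-k) - 1} \<subseteq> Z ` {t0..b}"
  proof
    fix z assume z: "z \<in> {a..exp (-k) - 1}"
    have p: "phi t0 k z \<in> {t0..<pi/2}" "Z (phi t0 k z) = z" using phi_prop z by auto
    have "phi t0 k z \<le> b"
    proof (rule ccontr)
      assume "\<not> ?thesis"
      then have "Z (phi t0 k z) < Z b" using Z_strict[of b "phi t0 k z"] b p by auto
      then show False using p b z by auto
    qed
    then show "z \<in> Z ` {t0..b}" using p by (metis atLeastAtMost_iff atLeastLessThan_iff image_eqI)
  qed
  then show ?thesis using continuous_on_subset c by blast
qed

end


context GP begin

lemma G_cont: "continuous_on {t0..pi/2} (G t0 k)"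
  by (intro continuous_at_imp_continuous_on ballI DERIV_isCont[OF G_deriv] cos_pos) auto

lemma sin_pos: "t0 \<le> x \<Longrightarrow> x \<le> pi/2 \<Longrightarrow> sin x > 0"
  using t0 by (intro sin_gt_zero) auto

lemma F_deriv: assumes "t0 \<le> x" "x < pi/2"
  shows "((\<lambda>x. q * g t0 k x - \<mu> / sin x) has_real_derivative (cos x / (sin x)^2 * (q * Z x + \<mu>))) (at x)"
proof -
  have s: "sin x > 0" using sin_pos assms by auto
  have c: "cos x > 0" using assms t0 by (intro cos_gt_zero_pi) auto
  have dG: "(G t0 k has_real_derivative (- Af (cos (x - t0)) * sin (x - t0))) (at x)"
    using G_deriv cos_pos assms by auto
  have d: "((\<lambda>x. q * (G t0 k x / sin x) - \<mu> / sin x) has_real_derivative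
     (q * (((- Af (cos (x - t0)) * sin (x - t0)) * sin x - G t0 k x * cos x) / (sin x * sin x))
      - (0 * sin x - \<mu> * cos x) / (sin x * sin x))) (at x)"
    using s by (intro DERIV_diff DERIV_cmult DERIV_divide dG DERIV_sin DERIV_const) auto
  have e: "(- Af (cos (x - t0)) * sin (x - t0)) * sin x - G t0 k x * cos x = cos x * Z x"
    using c unfolding Z_def tan_def by (simp add: field_simps)
  have "q * (((- Af (cos (x - t0)) * sin (x - t0)) * sin x - G t0 k x * cos x) / (sin x * sin x))
      - (0 * sin x - \<mu> * cos x) / (sin x * sin x) = cos x / (sin x)^2 * (q * Z x + \<mu>)"
    unfolding e using s by (simp add: field_simps power2_eq_square)
  with d show ?thesis unfolding g_def by simp
qed

lemma F_cont: "continuous_on {t0..pi/2} (\<lambda>x. q * g t0 k x - \<mu> / sin x)"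
  unfolding g_def using sin_pos
  by (intro continuous_intros G_cont) (auto simp: less_imp_neq[THEN not_sym])

lemma F_max:
  assumes q: "q > 0" and zq: "-\<mu>/q \<le> exp (-k) - 1" and x: "x \<in> {t0..pi/2}"
    and nx: "x \<noteq> phi t0 k (-\<mu>/q)"
  shows "q * g t0 k x - \<mu> / sin x < q * g t0 k (phi t0 k (-\<mu>/q)) - \<mu> / sin (phi t0 k (-\<mu>/q))"
proof -
  define p where "p = phi t0 k (-\<mu>/q)"
  define F where "F = (\<lambda>x. q * g t0 k x - \<mu> / sin x)"
  have p: "p \<in> {t0..<pi/2}" "Z p = -\<mu>/q" using phi_prop zq unfolding p_def by auto
  have Fc: "continuous_on {a..b} F" if "t0 \<le> a" "b \<le> pi/2" for a b
    unfolding F_def using that by (intro continuous_on_subset[OF F_cont]) auto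
  have pos: "cos y / (sin y)^2 > 0" if "t0 \<le> y" "y < pi/2" for y
  proof -
    have "cos y > 0" using that t0 by (intro cos_gt_zero_pi) auto
    moreover have "sin y > 0" using sin_pos that by auto
    ultimately show ?thesis by simp
  qed
  have "F x < F p"
  proof (cases "x < p")
    case True
    show ?thesis
    proof (rule DERIV_pos_imp_increasing_open[OF True _ Fc])
      fix y assume y: "x < y" "y < p"
      have "Z p < Z y" using Z_strict[of y p] y x p by auto
      then have "q * Z y + \<mu> > 0" using p q by (simp add: field_simps)
      moreover have "DERIV F y :> cos y / (sin y)^2 * (q * Z y + \<mu>)"
        unfolding F_def using F_deriv[of y q \<mu>] y x p by auto
      moreover have "cos y / (sin y)^2 > 0" using pos[of y] y x p by auto
      ultimately show "\<exists>D. DERIV F y :> D \<and> D > 0" by (meson mult_pos_pos)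
    qed (use x p in auto)
  next
    case False
    then have xp: "p < x" using nx unfolding p_def by auto
    have "F x < F p"
    proof (rule DERIV_neg_imp_decreasing_open[OF xp _ Fc])
      fix y assume y: "p < y" "y < x"
      have "Z y < Z p" using Z_strict[of p y] y x p by auto
      then have "q * Z y + \<mu> < 0" using p q by (simp add: field_simps)
      moreover have "DERIV F y :> cos y / (sin y)^2 * (q * Z y + \<mu>)"
        unfolding F_def using F_deriv[of y q \<mu>] y x p by auto
      moreover have "cos y / (sin y)^2 > 0" using pos[of y] y x p by auto
      ultimately show "\<exists>D. DERIV F y :> D \<and> D < 0" by (meson mult_pos_neg)
    qed (use x p in auto)
    then show ?thesis .
  qed
  then show ?thesis unfolding F_def p_def .
qed

lemma F_le:
  assumes q: "q > 0" and zq: "-\<mu>/q \<le> exp (-k) - 1" and x: "x \<in> {t0..pi/2}"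
  shows "q * g t0 k x - \<mu> / sin x \<le> q * g t0 k (phi t0 k (-\<mu>/q)) - \<mu> / sin (phi t0 k (-\<mu>/q))"
  using F_max[OF assms] by (cases "x = phi t0 k (-\<mu>/q)") auto

lemma G_t0: "G t0 k t0 = 1 - exp (-k)"
  unfolding G_def by simp

lemma G_le: assumes "t0 \<le> x" "x \<le> pi/2" shows "G t0 k x \<le> 1 - exp (-k)"
proof -
  have "G t0 k x \<le> G t0 k t0"
  proof (rule DERIV_nonpos_imp_decreasing_open[OF assms(1)])
    fix y assume y: "t0 < y" "y < x"
    have c: "cos (y - t0) > 0" using cos_pos y assms by auto
    have "sin (y - t0) > 0" using y assms t0 by (intro sin_gt_zero2) auto
    then have "- Af (cos (y - t0)) * sin (y - t0) \<le> 0" using Af_pos[OF c] by simp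
    then show "\<exists>D. DERIV (G t0 k) y :> D \<and> D \<le> 0" using G_deriv[OF c] by blast
  next
    show "continuous_on {t0..x} (G t0 k)" using continuous_on_subset[OF G_cont] assms by auto
  qed
  then show ?thesis using G_t0 by simp
qed

lemma sin_ge_t0: assumes "t0 \<le> x" "x \<le> pi/2" shows "sin t0 \<le> sin x"
  using assms t0 by (intro sin_monotone_2pi_le) auto

lemma g_bounds: assumes "t0 \<le> x" "x \<le> pi/2"
  shows "0 \<le> g t0 k x" "g t0 k x \<le> (1 - exp (-k)) / sin t0"
proof -
  have s: "sin x > 0" using sin_pos assms by auto
  have s0: "sin t0 > 0" using sin_pos t0 by auto
  show "0 \<le> g t0 k x" unfolding g_def using G_nonneg[OF assms] s by simp
  have l: "0 \<le> 1 - exp (-k)" using k by simp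
  have "g t0 k x \<le> (1 - exp (-k)) / sin x"
    unfolding g_def using G_le[OF assms] s by (simp add: divide_right_mono)
  also have "\<dots> \<le> (1 - exp (-k)) / sin t0"
    using sin_ge_t0[OF assms] s0 l by (simp add: divide_left_mono)
  finally show "g t0 k x \<le> (1 - exp (-k)) / sin t0" .
qed

lemma inv_sin_bounds: assumes "t0 \<le> x" "x \<le> pi/2"
  shows "1 \<le> 1 / sin x" "1 / sin x \<le> 1 / sin t0"
proof -
  have s: "sin x > 0" using sin_pos assms by auto
  have s0: "sin t0 > 0" using sin_pos t0 by auto
  show "1 \<le> 1 / sin x" using s by simp
  show "1 / sin x \<le> 1 / sin t0" using sin_ge_t0[OF assms] s0 by (simp add: frac_le)
qed

end

lemma AE_negligible:
  assumes "AE x in lebesgue. P x" shows "negligible {x. \<not> P x}"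
proof -
  obtain N where N: "{x \<in> space lebesgue. \<not> P x} \<subseteq> N" "emeasure lebesgue N = 0" "N \<in> sets lebesgue"
    using assms by (rule AE_E)
  have "negligible N" using N by (simp add: negligible_iff_null_sets null_sets_def)
  then show ?thesis using N by (auto intro: negligible_subset)
qed

lemma g_meas:
  assumes "f \<in> borel_measurable (lebesgue_on S)"
  shows "(\<lambda>y. g t0 k (f y)) \<in> borel_measurable (lebesgue_on S)"
  unfolding g_def G_def using assms by measurable

lemma if_meas:
  fixes r :: real
  assumes "f \<in> borel_measurable (lebesgue_on S)" "h \<in> borel_measurable (lebesgue_on S)"
  shows "(\<lambda>y. if y \<le> r then f y else h y) \<in> borel_measurable (lebesgue_on S)"
proof -
  have "{..r} \<in> sets borel" by (simp add: borel_closed)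
  then have "{..r} \<in> sets lebesgue" by (simp add: sets_completionI_sets)
  then have "{..r} \<inter> space (lebesgue_on S) \<in> sets (lebesgue_on S)"
    by (auto simp: sets_restrict_space image_iff intro!: bexI[of _ "{..r}"])
  then have "(\<lambda>y. if y \<in> {..r} then f y else h y) \<in> borel_measurable (lebesgue_on S)"
    by (rule measurable_If_set[OF assms])
  then show ?thesis by simp
qed

lemma AE_zero_of_integral:
  fixes f :: "real \<Rightarrow> real"
  assumes "f integrable_on {a..b}" "\<And>x. x\<in>{a..b} \<Longrightarrow> f x \<ge> 0" "integral {a..b} f = 0"
  shows "AE x in lebesgue. x \<in> {a..b} \<longrightarrow> f x = 0"
proof -
  have ai: "f absolutely_integrable_on {a..b}"
    using assms nonnegative_absolutely_integrable_1 by blast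
  have int: "integrable (lebesgue_on {a..b}) f"
    using ai by (simp add: integrable_restrict_space set_integrable_def)
  have "integral\<^sup>L (lebesgue_on {a..b}) f = 0"
    using lebesgue_integral_eq_integral[OF int] assms(3) by simp
  then have "AE x in lebesgue_on {a..b}. f x = 0"
    using integral_nonneg_eq_0_iff_AE[OF int] assms(2)
    by (simp add: AE_restrict_space_iff)
  then show ?thesis by (simp add: AE_restrict_space_iff)
qed



locale EQ = GP +
  fixes L \<rho> :: real and I \<theta>s :: "real \<Rightarrow> real" and h :: real
  assumes L: "L > 0" and \<rho>: "\<rho> > 0"
    and ce: "competitive_equilibrium t0 L k \<rho> I h \<theta>s"
begin

lemma feas: "OP1_feasible t0 L h \<theta>s"
  using ce unfolding competitive_equilibrium_def OP1_optimal_def by auto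

lemma h_pos: "h > 0" using feas unfolding OP1_feasible_def by auto
lemma \<theta>s_meas: "\<theta>s \<in> borel_measurable (lebesgue_on {0..h})" using feas unfolding OP1_feasible_def by auto
lemma \<theta>s_range: "y \<in> {0..h} \<Longrightarrow> \<theta>s y \<in> {t0..pi/2}" using feas unfolding OP1_feasible_def by auto
lemma inv_int: "(\<lambda>y. 1 / sin (\<theta>s y)) integrable_on {0..h}" using feas unfolding OP1_feasible_def by auto
lemma inv_L: "integral {0..h} (\<lambda>y. 1 / sin (\<theta>s y)) = L" using feas unfolding OP1_feasible_def by auto
lemma opt: "OP1_feasible t0 L h' \<theta>' \<Longrightarrow> OP1_value t0 k I h' \<theta>' \<le> OP1_value t0 k I h \<theta>s"
  using ce unfolding competitive_equilibrium_def OP1_optimal_def by auto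
lemma I_eq: "y \<ge> 0 \<Longrightarrow> I y = exp (- \<rho> * integral {min y h..h} (\<lambda>\<eta>. k / sin (\<theta>s \<eta>)))"
  using ce unfolding competitive_equilibrium_def by auto

definition J :: "real \<Rightarrow> real" where "J y = integral {y..h} (\<lambda>\<eta>. k / sin (\<theta>s \<eta>))"

lemma k_int: "(\<lambda>\<eta>. k / sin (\<theta>s \<eta>)) integrable_on {0..h}"
  using integrable_on_cmult_left[OF inv_int, of k] by simp

lemma J_cont: "continuous_on {0..h} J"
  unfolding J_def by (rule indefinite_integral_continuous_1'[OF k_int])

lemma k_int_sub: "{a..b} \<subseteq> {0..h} \<Longrightarrow> (\<lambda>\<eta>. k / sin (\<theta>s \<eta>)) integrable_on {a..b}"
  using integrable_on_subinterval[OF k_int] by blast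

lemma ksin_bounds: assumes "y \<in> {0..h}" shows "k \<le> k / sin (\<theta>s y)" "k / sin (\<theta>s y) \<le> k / sin t0"
proof -
  have r: "\<theta>s y \<in> {t0..pi/2}" using \<theta>s_range assms by auto
  have "1 \<le> 1 / sin (\<theta>s y)" "1 / sin (\<theta>s y) \<le> 1 / sin t0" using inv_sin_bounds r by auto
  then show "k \<le> k / sin (\<theta>s y)" "k / sin (\<theta>s y) \<le> k / sin t0"
    using k mult_left_mono[of 1 "1 / sin (\<theta>s y)" k] mult_left_mono[of "1 / sin (\<theta>s y)" "1 / sin t0" k]
    by auto
qed

lemma J_bounds: assumes "y \<in> {0..h}" shows "k * (h - y) \<le> J y" "J y \<le> k * h / sin t0"
proof -
  have i: "(\<lambda>\<eta>. k / sin (\<theta>s \<eta>)) integrable_on {y..h}" using k_int_sub assms by auto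
  have "integral {y..h} (\<lambda>\<eta>. k) \<le> J y"
    unfolding J_def using assms ksin_bounds by (intro integral_le i) auto
  then show "k * (h - y) \<le> J y" using assms by (simp add: mult.commute)
  have "J y \<le> integral {y..h} (\<lambda>\<eta>. k / sin t0)"
    unfolding J_def using assms ksin_bounds by (intro integral_le i) auto
  also have "\<dots> = (h - y) * (k / sin t0)" using assms by simp
  also have "\<dots> \<le> h * (k / sin t0)"
    using assms k sin_pos[of t0] t0 by (intro mult_right_mono) auto
  finally show "J y \<le> k * h / sin t0" by (simp add: mult.commute)
qed

lemma J_h: "J h = 0" unfolding J_def by simp

lemma I_J: "y \<in> {0..h} \<Longrightarrow> I y = exp (- \<rho> * J y)"
  using I_eq unfolding J_def by auto

lemma I_ge_h: "y \<ge> h \<Longrightarrow> I y = 1"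
  using I_eq[of y] h_pos by auto

end

context EQ begin

definition cl :: "real \<Rightarrow> real" where "cl y = max 0 (min y h)"
definition Jc :: "real \<Rightarrow> real" where "Jc y = J (cl y)"
definition W :: real where "W = k * h / sin t0"
definition zz :: real where "zz = exp (-k) - 1"
definition lam :: real where "lam = 1 - exp (-k)"
definition T :: "real \<Rightarrow> real" where "T y = phi t0 k (zz * exp (\<rho> * Jc y))"

lemma zz_neg: "zz < 0" unfolding zz_def using k by simp
lemma lam_pos: "lam > 0" unfolding lam_def using k by simp
lemma zz_lam: "zz = - lam" unfolding zz_def lam_def by simp

lemma cl_range: "cl y \<in> {0..h}" unfolding cl_def using h_pos by auto
lemma cl_id: "y \<in> {0..h} \<Longrightarrow> cl y = y" unfolding cl_def by auto
lemma cl_cont: "continuous_on UNIV cl" unfolding cl_def by (intro continuous_intros)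

lemma Jc_cont: "continuous_on UNIV Jc"
  unfolding Jc_def using cl_range by (intro continuous_on_compose2[OF J_cont cl_cont]) auto

lemma Jc_bounds: "0 \<le> Jc y" "Jc y \<le> W"
proof -
  have "k * (h - cl y) \<le> J (cl y)" "J (cl y) \<le> W" using J_bounds cl_range unfolding W_def by auto
  moreover have "0 \<le> k * (h - cl y)" using cl_range k by auto
  ultimately show "0 \<le> Jc y" "Jc y \<le> W" unfolding Jc_def by auto
qed

lemma Jc_eq: "y \<in> {0..h} \<Longrightarrow> Jc y = J y" unfolding Jc_def using cl_id by auto
lemma Jc_ge_h: "y \<ge> h \<Longrightarrow> Jc y = 0" unfolding Jc_def cl_def using h_pos J_h by auto

lemma I_Jc: "y \<ge> 0 \<Longrightarrow> I y = exp (- \<rho> * Jc y)"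
  using I_J Jc_eq I_ge_h Jc_ge_h by (cases "y \<le> h") auto

lemma I_bounds: "y \<ge> 0 \<Longrightarrow> 0 < I y \<and> I y \<le> 1"
  using I_Jc Jc_bounds \<rho> by auto

lemma arg_range: "zz * exp (\<rho> * W) \<le> zz * exp (\<rho> * Jc y) \<and> zz * exp (\<rho> * Jc y) \<le> zz"
  using Jc_bounds zz_neg \<rho> by (auto simp: mult_left_mono_neg)

lemma T_cont: "continuous_on UNIV T"
proof -
  have c1: "continuous_on UNIV (\<lambda>y. zz * exp (\<rho> * Jc y))" by (intro continuous_intros Jc_cont)
  have a: "zz * exp (\<rho> * W) \<le> exp (-k) - 1" using arg_range[of 0] unfolding zz_def by linarith
  have c2: "continuous_on {zz * exp (\<rho> * W)..zz} (phi t0 k)"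
    using phi_cont[OF a] unfolding zz_def .
  have im: "(\<lambda>y. zz * exp (\<rho> * Jc y)) ` UNIV \<subseteq> {zz * exp (\<rho> * W)..zz}"
    using arg_range by auto
  show ?thesis unfolding T_def by (rule continuous_on_compose2[OF c2 c1 im])
qed

lemma T_range: "T y \<in> {t0..<pi/2}"
  unfolding T_def using phi_prop arg_range unfolding zz_def by blast

lemma T_ge_h: "y \<ge> h \<Longrightarrow> T y = t0"
  unfolding T_def using Jc_ge_h phi_zz unfolding zz_def by simp

lemma key_arg: assumes "y \<ge> 0" shows "- lam / I y = zz * exp (\<rho> * Jc y)"
proof -
  have "I y = inverse (exp (\<rho> * Jc y))" using I_Jc[OF assms] by (simp add: exp_minus)
  then show ?thesis by (simp add: zz_lam divide_inverse)
qed

lemma T_alt: "y \<ge> 0 \<Longrightarrow> T y = phi t0 k (- lam / I y)"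
  unfolding T_def using key_arg by simp

lemma key_le: assumes "y \<ge> 0" "x \<in> {t0..pi/2}"
  shows "I y * g t0 k x - lam / sin x \<le> I y * g t0 k (T y) - lam / sin (T y)"
proof -
  have q: "I y > 0" using I_bounds[OF assms(1)] by simp
  have zq: "- lam / I y \<le> exp (-k) - 1" using key_arg[OF assms(1)] arg_range[of y] unfolding zz_def by simp
  have e: "T y = phi t0 k (- lam / I y)" by (rule T_alt[OF assms(1)])
  show ?thesis unfolding e by (rule F_le[OF q zq assms(2)])
qed

lemma key_less: assumes "y \<ge> 0" "x \<in> {t0..pi/2}" "x \<noteq> T y"
  shows "I y * g t0 k x - lam / sin x < I y * g t0 k (T y) - lam / sin (T y)"
proof -
  have q: "I y > 0" using I_bounds[OF assms(1)] by simp
  have zq: "- lam / I y \<le> exp (-k) - 1" using key_arg[OF assms(1)] arg_range[of y] unfolding zz_def by simp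
  have e: "T y = phi t0 k (- lam / I y)" by (rule T_alt[OF assms(1)])
  have "x \<noteq> phi t0 k (- lam / I y)" using assms(3) unfolding e .
  then show ?thesis unfolding e by (rule F_max[OF q zq assms(2)])
qed

lemma gT_cont: "continuous_on UNIV (\<lambda>y. g t0 k (T y))"
proof -
  have "T ` UNIV \<subseteq> {t0..pi/2}"
  proof (rule image_subsetI)
    fix y have "T y \<in> {t0..<pi/2}" by (rule T_range)
    then show "T y \<in> {t0..pi/2}" by auto
  qed
  then have "continuous_on UNIV (\<lambda>y. G t0 k (T y))"
    by (intro continuous_on_compose2[OF G_cont T_cont])
  moreover have "sin (T y) \<noteq> 0" for y using sin_pos T_range[of y] by (simp add: less_imp_neq[THEN not_sym])
  ultimately show ?thesis unfolding g_def by (intro continuous_intros T_cont) auto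
qed

lemma sT_cont: "continuous_on UNIV (\<lambda>y. 1 / sin (T y))"
proof -
  have "sin (T y) \<noteq> 0" for y using sin_pos T_range[of y] by (simp add: less_imp_neq[THEN not_sym])
  then show ?thesis by (intro continuous_intros T_cont) auto
qed

lemma Ic_cont: "continuous_on UNIV (\<lambda>y. exp (- \<rho> * Jc y))"
  by (intro continuous_intros Jc_cont)

lemma IgT_int: "0 \<le> a \<Longrightarrow> (\<lambda>y. I y * g t0 k (T y)) integrable_on {a..b}"
  by (rule integrable_eq[OF integrable_continuous_interval[of a b "\<lambda>y. exp (- \<rho> * Jc y) * g t0 k (T y)"]])
     (auto intro!: continuous_intros continuous_on_subset[OF gT_cont] continuous_on_subset[OF Jc_cont] simp: I_Jc)

lemma sT_int: "(\<lambda>y. 1 / sin (T y)) integrable_on {a..b}"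
  by (rule integrable_continuous_interval[OF continuous_on_subset[OF sT_cont]]) auto

lemma inv_int_sub: "{a..b} \<subseteq> {0..h} \<Longrightarrow> (\<lambda>y. 1 / sin (\<theta>s y)) integrable_on {a..b}"
  using integrable_on_subinterval[OF inv_int] by blast

lemma Ig\<theta>s_int: assumes "{a..b} \<subseteq> {0..h}" shows "(\<lambda>y. I y * g t0 k (\<theta>s y)) integrable_on {a..b}"
proof -
  have m\<theta>: "\<theta>s \<in> borel_measurable (lebesgue_on {a..b})"
    using measurable_restrict_mono[OF \<theta>s_meas assms] .
  have mI: "(\<lambda>y. exp (- \<rho> * Jc y)) \<in> borel_measurable (lebesgue_on {a..b})"
    by (intro continuous_imp_measurable_on_sets_lebesgue continuous_on_subset[OF Ic_cont]) auto
  have m: "(\<lambda>y. exp (- \<rho> * Jc y) * g t0 k (\<theta>s y)) \<in> borel_measurable (lebesgue_on {a..b})"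
    using mI g_meas[OF m\<theta>] by (rule borel_measurable_times)
  have "(\<lambda>y. exp (- \<rho> * Jc y) * g t0 k (\<theta>s y)) integrable_on {a..b}"
  proof (rule measurable_bounded_by_integrable_imp_integrable[OF m])
    show "(\<lambda>y. lam / sin t0) integrable_on {a..b}" by auto
    show "{a..b} \<in> sets lebesgue" by simp
    fix y assume y: "y \<in> {a..b}"
    then have r: "\<theta>s y \<in> {t0..pi/2}" using \<theta>s_range assms by auto
    have gb: "0 \<le> g t0 k (\<theta>s y)" "g t0 k (\<theta>s y) \<le> lam / sin t0" using g_bounds r unfolding lam_def by auto
    have e: "0 < exp (- \<rho> * Jc y)" "exp (- \<rho> * Jc y) \<le> 1" using Jc_bounds \<rho> by auto
    have "exp (- \<rho> * Jc y) * g t0 k (\<theta>s y) \<le> 1 * (lam / sin t0)"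
      using e gb by (intro mult_mono) auto
    then show "norm (exp (- \<rho> * Jc y) * g t0 k (\<theta>s y)) \<le> lam / sin t0"
      using e gb by simp
  qed
  then show ?thesis
    by (rule integrable_eq) (use assms I_Jc in auto)
qed

end

lemma integral_cmult_real: "integral S (\<lambda>x. c * f x) = c * integral S (f :: 'a::euclidean_space \<Rightarrow> real)"
  using integral_cmul[of S c f] by simp

lemma split_if_int:
  fixes f g :: "real \<Rightarrow> real"
  assumes "0 \<le> r" "r \<le> b" "f integrable_on {0..r}" "g integrable_on {r..b}"
  shows "(\<lambda>y. if y \<le> r then f y else g y) integrable_on {0..b}"
    "integral {0..b} (\<lambda>y. if y \<le> r then f y else g y) = integral {0..r} f + integral {r..b} g"
proof -
  let ?F = "\<lambda>y. if y \<le> r then f y else g y"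
  have i1: "?F integrable_on {0..r}" by (rule integrable_eq[OF assms(3)]) auto
  have e1: "integral {0..r} ?F = integral {0..r} f" by (rule Henstock_Kurzweil_Integration.integral_cong) auto
  have i2: "?F integrable_on {r..b}" by (rule integrable_spike[OF assms(4) negligible_sing[of r]]) auto
  have e2: "integral {r..b} ?F = integral {r..b} g"
    by (rule integral_spike[OF negligible_sing[of r]]) auto
  show i: "?F integrable_on {0..b}" by (rule Henstock_Kurzweil_Integration.integrable_combine[OF assms(1,2) i1 i2])
  show "integral {0..b} ?F = integral {0..r} f + integral {r..b} g"
    using Henstock_Kurzweil_Integration.integral_combine[OF assms(1,2) i] e1 e2 by simp
qed

context EQ begin

lemma T_meas: "T \<in> borel_measurable (lebesgue_on S)" if "S \<in> sets lebesgue" for S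
  using continuous_imp_measurable_on_sets_lebesgue[OF continuous_on_subset[OF T_cont] that] by simp

lemma value_def': "OP1_value t0 k I h' \<theta>' = integral {0..h'} (\<lambda>y. I y * g t0 k (\<theta>' y))"
  unfolding OP1_value_def ..

definition B0 :: real where "B0 = integral {0..h} (\<lambda>y. 1 / sin (T y))"

definition Nf :: "real \<Rightarrow> real" where
  "Nf y = (I y * g t0 k (T y) - lam * (1 / sin (T y))) - (I y * g t0 k (\<theta>s y) - lam * (1 / sin (\<theta>s y)))"

lemma Nf_nonneg: "y \<in> {0..h} \<Longrightarrow> 0 \<le> Nf y"
  using key_le[of y "\<theta>s y"] \<theta>s_range unfolding Nf_def by auto

lemma Nf_pos: "y \<in> {0..h} \<Longrightarrow> \<theta>s y \<noteq> T y \<Longrightarrow> 0 < Nf y"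
  using key_less[of y "\<theta>s y"] \<theta>s_range unfolding Nf_def by auto

lemma Nf_int: "Nf integrable_on {0..h}"
  unfolding Nf_def
  by (intro integrable_diff integrable_on_mult_right IgT_int Ig\<theta>s_int inv_int sT_int) auto

lemma Nf_integral: "integral {0..h} Nf =
   (integral {0..h} (\<lambda>y. I y * g t0 k (T y)) - lam * B0) - (integral {0..h} (\<lambda>y. I y * g t0 k (\<theta>s y)) - lam * L)"
proof -
  let ?A = "\<lambda>y. I y * g t0 k (T y)" and ?P = "\<lambda>y. 1 / sin (T y)"
  let ?C = "\<lambda>y. I y * g t0 k (\<theta>s y)" and ?Q = "\<lambda>y. 1 / sin (\<theta>s y)"
  have iA: "?A integrable_on {0..h}" by (rule IgT_int) simp
  have iP: "?P integrable_on {0..h}" by (rule sT_int)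
  have iC: "?C integrable_on {0..h}" by (rule Ig\<theta>s_int) simp
  have iQ: "?Q integrable_on {0..h}" by (rule inv_int)
  have iP': "(\<lambda>y. lam * ?P y) integrable_on {0..h}" by (rule integrable_on_mult_right[OF iP])
  have iQ': "(\<lambda>y. lam * ?Q y) integrable_on {0..h}" by (rule integrable_on_mult_right[OF iQ])
  have 1: "integral {0..h} Nf = integral {0..h} (\<lambda>y. ?A y - lam * ?P y) - integral {0..h} (\<lambda>y. ?C y - lam * ?Q y)"
    unfolding Nf_def by (rule integral_diff[OF integrable_diff[OF iA iP'] integrable_diff[OF iC iQ']])
  have 2: "integral {0..h} (\<lambda>y. ?A y - lam * ?P y) = integral {0..h} ?A - lam * B0"
    unfolding B0_def using integral_diff[OF iA iP'] integral_cmult_real[of "{0..h}" lam ?P] by simp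
  have 3: "integral {0..h} (\<lambda>y. ?C y - lam * ?Q y) = integral {0..h} ?C - lam * L"
    using integral_diff[OF iC iQ'] integral_cmult_real[of "{0..h}" lam ?Q] inv_L by simp
  show ?thesis using 1 2 3 by simp
qed

lemma AE_from_Nf: assumes "integral {0..h} Nf \<le> 0"
  shows "AE y in lebesgue. y \<in> {0..h} \<longrightarrow> \<theta>s y = T y"
proof -
  have "integral {0..h} Nf \<ge> 0" using Nf_nonneg by (intro integral_nonneg Nf_int) auto
  then have "integral {0..h} Nf = 0" using assms by simp
  then have "AE y in lebesgue. y \<in> {0..h} \<longrightarrow> Nf y = 0"
    using AE_zero_of_integral[OF Nf_int] Nf_nonneg by blast
  then show ?thesis
    by (rule AE_mp) (use Nf_pos in \<open>auto intro!: AE_I2 simp: less_le\<close>)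
qed

end

lemma integral_const_ivl: "(a::real) \<le> b \<Longrightarrow> integral {a..b} (\<lambda>x. c) = (b - a) * (c::real)"
  by simp

context EQ begin

lemma s0: "sin t0 > 0" using sin_pos t0 by auto

lemma g_t0: "g t0 k t0 = lam / sin t0" unfolding g_def G_t0 lam_def ..

lemma caseA: assumes "B0 \<le> L" shows "AE y in lebesgue. y \<in> {0..h} \<longrightarrow> \<theta>s y = T y"
proof -
  define h' where "h' = h + (L - B0) * sin t0"
  have hh: "h \<le> h'" unfolding h'_def using assms s0 by simp
  have hp: "h' > 0" using hh h_pos by simp
  have Tc: "\<And>y. y \<in> {h..h'} \<Longrightarrow> T y = t0" using T_ge_h by auto
  have Ic: "\<And>y. y \<in> {h..h'} \<Longrightarrow> I y = 1" using I_ge_h by auto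
  have iP: "integral {h..h'} (\<lambda>y. 1 / sin (T y)) = L - B0"
  proof -
    have "integral {h..h'} (\<lambda>y. 1 / sin (T y)) = integral {h..h'} (\<lambda>y. 1 / sin t0)"
      by (rule Henstock_Kurzweil_Integration.integral_cong) (use Tc in auto)
    also have "\<dots> = (h' - h) * (1 / sin t0)" using hh by (rule integral_const_ivl)
    also have "\<dots> = L - B0" unfolding h'_def using s0 by simp
    finally show ?thesis .
  qed
  have f: "OP1_feasible t0 L h' T"
    unfolding OP1_feasible_def
  proof (intro conjI ballI)
    show "h' > 0" by (rule hp)
    show "T \<in> borel_measurable (lebesgue_on {0..h'})" by (rule T_meas) simp
    fix y show "T y \<in> {t0..pi/2}" using T_range[of y] by auto
  next
    show "(\<lambda>y. 1 / sin (T y)) integrable_on {0..h'}" by (rule sT_int)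
    have "integral {0..h} (\<lambda>y. 1 / sin (T y)) + integral {h..h'} (\<lambda>y. 1 / sin (T y)) = integral {0..h'} (\<lambda>y. 1 / sin (T y))"
      using h_pos hh by (intro Henstock_Kurzweil_Integration.integral_combine sT_int) auto
    then show "integral {0..h'} (\<lambda>y. 1 / sin (T y)) = L" using iP unfolding B0_def by simp
  qed
  have iA: "integral {h..h'} (\<lambda>y. I y * g t0 k (T y)) = (L - B0) * lam"
  proof -
    have "integral {h..h'} (\<lambda>y. I y * g t0 k (T y)) = integral {h..h'} (\<lambda>y. lam / sin t0)"
      by (rule Henstock_Kurzweil_Integration.integral_cong) (use Tc Ic g_t0 in auto)
    also have "\<dots> = (h' - h) * (lam / sin t0)" using hh by (rule integral_const_ivl)
    also have "\<dots> = (L - B0) * lam" unfolding h'_def using s0 by simp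
    finally show ?thesis .
  qed
  have v: "OP1_value t0 k I h' T = integral {0..h} (\<lambda>y. I y * g t0 k (T y)) + (L - B0) * lam"
  proof -
    have "integral {0..h} (\<lambda>y. I y * g t0 k (T y)) + integral {h..h'} (\<lambda>y. I y * g t0 k (T y))
        = integral {0..h'} (\<lambda>y. I y * g t0 k (T y))"
      using h_pos hh by (intro Henstock_Kurzweil_Integration.integral_combine IgT_int) auto
    then show ?thesis unfolding value_def' using iA by simp
  qed
  have "OP1_value t0 k I h' T \<le> OP1_value t0 k I h \<theta>s" by (rule opt[OF f])
  then have "integral {0..h} (\<lambda>y. I y * g t0 k (T y)) + (L - B0) * lam \<le> integral {0..h} (\<lambda>y. I y * g t0 k (\<theta>s y))"
    unfolding v by (simp add: value_def')
  then have "integral {0..h} Nf \<le> 0" unfolding Nf_integral by (simp add: algebra_simps)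
  then show ?thesis by (rule AE_from_Nf)
qed

end

context EQ begin

lemma caseB: assumes "B0 > L" shows False
proof -
  define C0 where "C0 = 1 / sin t0"
  have C0: "C0 \<ge> 1" unfolding C0_def using s0 sin_le_one[of t0] by simp
  define D where "D y = 1 / sin (T y) - 1 / sin (\<theta>s y)" for y
  have Dint: "D integrable_on {a..b}" if "{a..b} \<subseteq> {0..h}" for a b
    unfolding D_def using that by (intro integrable_diff sT_int inv_int_sub)
  have Tb: "1 / sin (T y) \<le> C0" for y
    using inv_sin_bounds[of "T y"] T_range[of y] unfolding C0_def by auto
  have sb: "1 \<le> 1 / sin (\<theta>s y)" "1 / sin (\<theta>s y) \<le> C0" if "y \<in> {0..h}" for y
    using inv_sin_bounds[of "\<theta>s y"] \<theta>s_range[OF that] unfolding C0_def by auto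
  have Dle: "D y \<le> C0" if "y \<in> {0..h}" for y
    using Tb[of y] sb[OF that] unfolding D_def by linarith
  define \<Delta> where "\<Delta> = B0 - L"
  have \<Delta>: "\<Delta> > 0" unfolding \<Delta>_def using assms by simp
  have intD: "integral {0..h} D = \<Delta>"
    unfolding D_def \<Delta>_def B0_def using integral_diff[OF sT_int inv_int] inv_L by simp
  define \<epsilon> where "\<epsilon> = min (h/2) (\<Delta> / (2 * C0))"
  have \<epsilon>: "\<epsilon> > 0" "\<epsilon> \<le> h/2" "\<epsilon> * C0 \<le> \<Delta> / 2"
    unfolding \<epsilon>_def using h_pos \<Delta> C0 by (auto simp: min_def field_simps)
  define h' where "h' = h - \<epsilon>"
  have h': "0 < h'" "h' < h" unfolding h'_def using \<epsilon> h_pos by auto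
  define b where "b = integral {h'..h} (\<lambda>y. 1 / sin (\<theta>s y))"
  have ib: "(\<lambda>y. 1 / sin (\<theta>s y)) integrable_on {h'..h}" using h' by (intro inv_int_sub) auto
  have b_lb: "\<epsilon> \<le> b"
  proof -
    have "integral {h'..h} (\<lambda>y. 1) \<le> b" unfolding b_def
      using sb h' by (intro integral_le ib) auto
    then show ?thesis using h' unfolding h'_def by simp
  qed
  have b_ub: "b \<le> \<epsilon> * C0"
  proof -
    have "b \<le> integral {h'..h} (\<lambda>y. C0)" unfolding b_def
      using sb h' by (intro integral_le ib) auto
    then show ?thesis using h' unfolding h'_def by simp
  qed
  have Dtop: "integral {h'..h} D \<le> \<epsilon> * C0"
  proof -
    have "integral {h'..h} D \<le> integral {h'..h} (\<lambda>y. C0)"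
      using Dle h' by (intro integral_le Dint) auto
    then show ?thesis using h' unfolding h'_def by simp
  qed
  have "integral {0..h'} D + integral {h'..h} D = integral {0..h} D"
    using h' by (intro Henstock_Kurzweil_Integration.integral_combine Dint) auto
  then have Ah': "b \<le> integral {0..h'} D" using intD Dtop b_ub \<epsilon> by linarith
  have Acont: "continuous_on {0..h'} (\<lambda>x. integral {0..x} D)"
    using h' by (intro indefinite_integral_continuous_1 Dint) auto
  have "\<exists>r. 0 \<le> r \<and> r \<le> h' \<and> integral {0..r} D = b"
    using Ah' b_lb \<epsilon> h' by (intro IVT'[OF _ _ _ Acont]) auto
  then obtain r where r: "0 \<le> r" "r \<le> h'" "integral {0..r} D = b" by blast
  define \<theta>' where "\<theta>' y = (if y \<le> r then T y else \<theta>s y)" for y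
  have sub: "{0..h'} \<subseteq> {0..h}" using h' by auto
  have split1: "(\<lambda>y. 1 / sin (\<theta>' y)) integrable_on {0..h'}"
     "integral {0..h'} (\<lambda>y. 1 / sin (\<theta>' y)) = integral {0..r} (\<lambda>y. 1 / sin (T y)) + integral {r..h'} (\<lambda>y. 1 / sin (\<theta>s y))"
  proof -
    have e: "(\<lambda>y. 1 / sin (\<theta>' y)) = (\<lambda>y. if y \<le> r then 1 / sin (T y) else 1 / sin (\<theta>s y))"
      unfolding \<theta>'_def by auto
    have "(\<lambda>y. 1 / sin (\<theta>s y)) integrable_on {r..h'}" using r h' by (intro inv_int_sub) auto
    from split_if_int[OF r(1,2) sT_int this]
    show "(\<lambda>y. 1 / sin (\<theta>' y)) integrable_on {0..h'}"
      "integral {0..h'} (\<lambda>y. 1 / sin (\<theta>' y)) = integral {0..r} (\<lambda>y. 1 / sin (T y)) + integral {r..h'} (\<lambda>y. 1 / sin (\<theta>s y))"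
      unfolding e by auto
  qed
  have c1: "integral {0..r} (\<lambda>y. 1 / sin (T y)) = b + integral {0..r} (\<lambda>y. 1 / sin (\<theta>s y))"
    using integral_diff[OF sT_int inv_int_sub[of 0 r]] r h' unfolding D_def[abs_def] by auto
  have c2: "integral {0..r} (\<lambda>y. 1 / sin (\<theta>s y)) + integral {r..h'} (\<lambda>y. 1 / sin (\<theta>s y)) = integral {0..h'} (\<lambda>y. 1 / sin (\<theta>s y))"
    using r h' by (intro Henstock_Kurzweil_Integration.integral_combine inv_int_sub) auto
  have c3: "integral {0..h'} (\<lambda>y. 1 / sin (\<theta>s y)) + b = L"
    unfolding b_def using h' inv_L
    by (simp add: Henstock_Kurzweil_Integration.integral_combine inv_int)
  have f: "OP1_feasible t0 L h' \<theta>'"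
    unfolding OP1_feasible_def
  proof (intro conjI ballI)
    show "h' > 0" by (rule h'(1))
    have m1: "T \<in> borel_measurable (lebesgue_on {0..h'})" by (rule T_meas) simp
    have m2: "\<theta>s \<in> borel_measurable (lebesgue_on {0..h'})" by (rule measurable_restrict_mono[OF \<theta>s_meas sub])
    show "\<theta>' \<in> borel_measurable (lebesgue_on {0..h'})"
      unfolding \<theta>'_def[abs_def] by (rule if_meas[OF m1 m2])
    fix y assume "y \<in> {0..h'}"
    then show "\<theta>' y \<in> {t0..pi/2}" unfolding \<theta>'_def using T_range[of y] \<theta>s_range sub by auto
  next
    show "(\<lambda>y. 1 / sin (\<theta>' y)) integrable_on {0..h'}" by (rule split1(1))
    show "integral {0..h'} (\<lambda>y. 1 / sin (\<theta>' y)) = L" using split1(2) c1 c2 c3 by simp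
  qed
  have split2: "OP1_value t0 k I h' \<theta>' = integral {0..r} (\<lambda>y. I y * g t0 k (T y)) + integral {r..h'} (\<lambda>y. I y * g t0 k (\<theta>s y))"
  proof -
    have e: "(\<lambda>y. I y * g t0 k (\<theta>' y)) = (\<lambda>y. if y \<le> r then I y * g t0 k (T y) else I y * g t0 k (\<theta>s y))"
      unfolding \<theta>'_def by auto
    have "(\<lambda>y. I y * g t0 k (\<theta>s y)) integrable_on {r..h'}" using r h' by (intro Ig\<theta>s_int) auto
    from split_if_int(2)[OF r(1,2) IgT_int[OF order_refl] this]
    show ?thesis unfolding value_def' e by simp
  qed
  have v3: "OP1_value t0 k I h \<theta>s = integral {0..r} (\<lambda>y. I y * g t0 k (\<theta>s y)) + integral {r..h'} (\<lambda>y. I y * g t0 k (\<theta>s y))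
      + integral {h'..h} (\<lambda>y. I y * g t0 k (\<theta>s y))"
  proof -
    have "integral {0..r} (\<lambda>y. I y * g t0 k (\<theta>s y)) + integral {r..h'} (\<lambda>y. I y * g t0 k (\<theta>s y))
        = integral {0..h'} (\<lambda>y. I y * g t0 k (\<theta>s y))"
      using r h' by (intro Henstock_Kurzweil_Integration.integral_combine Ig\<theta>s_int) auto
    moreover have "integral {0..h'} (\<lambda>y. I y * g t0 k (\<theta>s y)) + integral {h'..h} (\<lambda>y. I y * g t0 k (\<theta>s y))
        = integral {0..h} (\<lambda>y. I y * g t0 k (\<theta>s y))"
      using h' by (intro Henstock_Kurzweil_Integration.integral_combine Ig\<theta>s_int) auto
    ultimately show ?thesis unfolding value_def' by simp
  qed
  have optv: "integral {0..r} (\<lambda>y. I y * g t0 k (T y)) \<le> integral {0..r} (\<lambda>y. I y * g t0 k (\<theta>s y)) + integral {h'..h} (\<lambda>y. I y * g t0 k (\<theta>s y))"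
    using opt[OF f] split2 v3 by simp
  have lower: "lam * b \<le> integral {0..r} (\<lambda>y. I y * g t0 k (T y)) - integral {0..r} (\<lambda>y. I y * g t0 k (\<theta>s y))"
  proof -
    have iT: "(\<lambda>y. I y * g t0 k (T y)) integrable_on {0..r}" by (rule IgT_int) simp
    have iS: "(\<lambda>y. I y * g t0 k (\<theta>s y)) integrable_on {0..r}" using r h' by (intro Ig\<theta>s_int) auto
    have iD: "D integrable_on {0..r}" using r h' by (intro Dint) auto
    have "integral {0..r} (\<lambda>y. lam * D y) \<le> integral {0..r} (\<lambda>y. I y * g t0 k (T y) - I y * g t0 k (\<theta>s y))"
    proof (rule integral_le[OF integrable_on_mult_right[OF iD] integrable_diff[OF iT iS]])
      fix y assume y: "y \<in> {0..r}"
      then have y': "y \<in> {0..h}" using r h' by auto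
      have "I y * g t0 k (\<theta>s y) - lam / sin (\<theta>s y) \<le> I y * g t0 k (T y) - lam / sin (T y)"
        using key_le[of y "\<theta>s y"] \<theta>s_range[OF y'] y' by auto
      then show "lam * D y \<le> I y * g t0 k (T y) - I y * g t0 k (\<theta>s y)"
        unfolding D_def by (simp add: algebra_simps)
    qed
    then show ?thesis using r(3) integral_diff[OF iT iS] integral_cmult_real[of "{0..r}" lam D] by simp
  qed
  define q where "q y = 1 - exp (- \<rho> * Jc y)" for y
  have qc: "continuous_on {h'..h} q" unfolding q_def
    by (intro continuous_intros continuous_on_subset[OF Jc_cont]) auto
  have q_nonneg: "0 \<le> q y" for y unfolding q_def using Jc_bounds[of y] \<rho> by simp
  have upper: "integral {h'..h} (\<lambda>y. I y * g t0 k (\<theta>s y)) \<le> lam * b - lam * integral {h'..h} q"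
  proof -
    have iS: "(\<lambda>y. I y * g t0 k (\<theta>s y)) integrable_on {h'..h}" using h' by (intro Ig\<theta>s_int) auto
    have iq: "q integrable_on {h'..h}" by (rule integrable_continuous_interval[OF qc])
    have iR: "(\<lambda>y. lam * (1 / sin (\<theta>s y)) - lam * q y) integrable_on {h'..h}"
      by (intro integrable_diff integrable_on_mult_right ib iq)
    have "integral {h'..h} (\<lambda>y. I y * g t0 k (\<theta>s y)) \<le> integral {h'..h} (\<lambda>y. lam * (1 / sin (\<theta>s y)) - lam * q y)"
    proof (rule integral_le[OF iS iR])
      fix y assume y: "y \<in> {h'..h}"
      then have y': "y \<in> {0..h}" using h' by auto
      have r': "\<theta>s y \<in> {t0..pi/2}" using \<theta>s_range[OF y'] .
      define e where "e = I y"
      have e: "0 < e" "e \<le> 1" using I_bounds[of y] y' unfolding e_def by auto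
      have qe: "q y = 1 - e" unfolding q_def e_def using I_Jc[of y] y' by simp
      define s where "s = sin (\<theta>s y)"
      have s: "0 < s" "s \<le> 1" using sin_pos[of "\<theta>s y"] r' unfolding s_def by auto
      define GG where "GG = G t0 k (\<theta>s y)"
      have GG: "0 \<le> GG" "GG \<le> lam" using G_nonneg[of "\<theta>s y"] G_le[of "\<theta>s y"] r' unfolding GG_def lam_def by auto
      have num: "lam * (1 - e) \<le> lam - e * GG"
        using GG e by (simp add: algebra_simps mult_left_mono)
      have num0: "0 \<le> lam - e * GG" using num lam_pos e by (smt (verit) mult_nonneg_nonneg)
      have "lam - e * GG \<le> (lam - e * GG) / s" using num0 s by (simp add: le_divide_eq mult_left_le)
      then have "lam * (1 - e) \<le> (lam - e * GG) / s" using num by linarith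
      then have "e * (GG / s) \<le> lam * (1 / s) - lam * (1 - e)"
        using s by (simp add: field_simps)
      then show "I y * g t0 k (\<theta>s y) \<le> lam * (1 / sin (\<theta>s y)) - lam * q y"
        unfolding qe g_def e_def s_def GG_def by simp
    qed
    also have "\<dots> = lam * b - lam * integral {h'..h} q"
      unfolding b_def
      using integral_diff[OF integrable_on_mult_right[OF ib] integrable_on_mult_right[OF iq]]
        integral_cmult_real[of "{h'..h}" lam "\<lambda>y. 1 / sin (\<theta>s y)"] integral_cmult_real[of "{h'..h}" lam q]
      by simp
    finally show ?thesis .
  qed
  have qpos: "integral {h'..h} q > 0"
  proof -
    have "Jc h' \<ge> k * (h - h')" using J_bounds[of h'] Jc_eq[of h'] h' by auto
    then have "Jc h' > 0" using k h' by (smt (verit) mult_pos_pos)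
    then have "q h' \<noteq> 0" unfolding q_def using \<rho> by simp
    then have "integral {h'..h} q \<noteq> 0"
      using integral_eq_0_iff[OF qc h'(2)] q_nonneg h' by auto
    moreover have "integral {h'..h} q \<ge> 0"
      using q_nonneg by (intro integral_nonneg integrable_continuous_interval[OF qc]) auto
    ultimately show ?thesis by simp
  qed
  have "lam * integral {h'..h} q \<le> 0" using lower upper optv by linarith
  moreover have "lam * integral {h'..h} q > 0" using lam_pos qpos by simp
  ultimately show False by simp
qed

end

locale ZZ = GP +
  fixes \<rho> :: real and \<zeta> :: "real \<Rightarrow> real"
  assumes \<rho>: "\<rho> > 0" and \<zeta>0: "\<zeta> 0 = 0"
    and \<zeta>d: "\<And>t. t \<le> 0 \<Longrightarrow> (\<zeta> has_real_derivative
            (- \<rho> * k / sin (phi t0 k ((exp (-k) - 1) * exp (\<zeta> t))))) (at t within {..0})"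
begin

lemma \<zeta>_cont: "continuous_on {..0} \<zeta>"
  using \<zeta>d by (intro DERIV_continuous_on) auto

lemma \<zeta>_nonneg: assumes "t \<le> 0" shows "\<zeta> t \<ge> 0"
proof (rule ccontr)
  assume neg: "\<not> \<zeta> t \<ge> 0"
  then have t: "\<zeta> t < 0" "t < 0" using \<zeta>0 assms by (auto simp: le_less)
  define S where "S = {u \<in> {t..0}. \<zeta> u = 0}"
  have cS: "closed S" unfolding S_def
    by (intro continuous_closed_preimage_constant continuous_on_subset[OF \<zeta>_cont]) auto
  have "0 \<in> S" unfolding S_def using t \<zeta>0 by auto
  moreover have bS: "bdd_below S" unfolding S_def by (auto intro: bdd_belowI[of _ t])
  ultimately have sS: "Inf S \<in> S" using cS closed_contains_Inf by blast
  define s where "s = Inf S"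
  have s: "t \<le> s" "s \<le> 0" "\<zeta> s = 0" using sS unfolding S_def s_def by auto
  have ts: "t < s" using s t by (cases "t = s") auto
  have below: "\<zeta> u < 0" if u: "t \<le> u" "u < s" for u
  proof (rule ccontr)
    assume "\<not> \<zeta> u < 0"
    then have "\<zeta> t \<le> 0" "0 \<le> \<zeta> u" using t by auto
    moreover have "continuous_on {t..u} \<zeta>" using u s by (intro continuous_on_subset[OF \<zeta>_cont]) auto
    ultimately obtain v where v: "t \<le> v" "v \<le> u" "\<zeta> v = 0" using IVT'[of \<zeta> t 0 u] u by auto
    then have "v \<in> S" unfolding S_def using u s by auto
    then have "s \<le> v" unfolding s_def using bS by (rule cInf_lower)
    then show False using v u by simp
  qed
  have D: "(\<zeta> has_real_derivative (- \<rho> * k / sin t0)) (at s within {..0})"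
    using \<zeta>d[OF s(2)] s(3) phi_zz by simp
  have Dneg: "- \<rho> * k / sin t0 < 0" using \<rho> k sin_pos[of t0] t0 by (simp add: divide_neg_pos)
  have "((\<lambda>y. (\<zeta> y - \<zeta> s) / (y - s)) \<longlongrightarrow> - \<rho> * k / sin t0) (at s within {..0})"
    using D by (simp add: has_field_derivative_iff)
  then have "eventually (\<lambda>y. (\<zeta> y - \<zeta> s) / (y - s) < 0) (at s within {..0})"
    using Dneg by (rule order_tendstoD)
  then obtain d where d: "d > 0" "\<And>y. y \<in> {..0} \<Longrightarrow> y \<noteq> s \<Longrightarrow> dist y s < d \<Longrightarrow> (\<zeta> y - \<zeta> s) / (y - s) < 0"
    unfolding eventually_at by blast
  define y where "y = s - min (d/2) ((s - t)/2)"
  have m: "min (d/2) ((s - t)/2) \<le> (s - t)/2" "min (d/2) ((s - t)/2) > 0" "min (d/2) ((s - t)/2) \<le> d/2"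
    using d ts by (simp_all only: min.cobounded1 min.cobounded2) (simp add: min_def)
  have y: "t \<le> y" "y < s" "dist y s < d" using m d unfolding y_def dist_real_def by auto
  have "(\<zeta> y - \<zeta> s) / (y - s) < 0" using d(2)[of y] y s by auto
  then have "\<zeta> y > 0" using y s by (simp add: divide_less_0_iff)
  moreover have "\<zeta> y < 0" using below y by auto
  ultimately show False by simp
qed

end

locale EZ = EQ + ZZ
begin

lemma AE_T: "AE y in lebesgue. y \<in> {0..h} \<longrightarrow> \<theta>s y = T y"
  using caseA caseB by (cases "B0 \<le> L") auto

lemma negl: "negligible {y. y \<in> {0..h} \<and> \<theta>s y \<noteq> T y}"
  using AE_negligible[OF AE_T] by simp

definition fF :: "real \<Rightarrow> real" where "fF w = \<rho> * k / sin (phi t0 k (zz * exp w))"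
definition K :: "real \<Rightarrow> real" where "K y = \<rho> * Jc y"
definition Fn :: "real \<Rightarrow> real" where "Fn y = \<rho> * k / sin (T y)"

lemma Fn_cont: "continuous_on UNIV Fn"
proof -
  have "sin (T y) \<noteq> 0" for y using sin_pos T_range[of y] by (simp add: less_imp_neq[THEN not_sym])
  then show ?thesis unfolding Fn_def by (intro continuous_intros T_cont) auto
qed

lemma Fn_fF: "Fn y = fF (K y)" unfolding Fn_def fF_def K_def T_def ..

lemma K_int: assumes "y \<in> {0..h}" shows "K y = integral {y..h} Fn"
proof -
  have "J y = integral {y..h} (\<lambda>\<eta>. k / sin (T \<eta>))"
    unfolding J_def
  proof (rule integral_spike[OF negl])
    fix \<eta> assume "\<eta> \<in> {y..h} - {y. y \<in> {0..h} \<and> \<theta>s y \<noteq> T y}"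
    then show "k / sin (T \<eta>) = k / sin (\<theta>s \<eta>)" using assms by auto
  qed
  then have "K y = \<rho> * integral {y..h} (\<lambda>\<eta>. k / sin (T \<eta>))" unfolding K_def using Jc_eq assms by simp
  also have "\<dots> = integral {y..h} (\<lambda>\<eta>. \<rho> * (k / sin (T \<eta>)))" by (rule integral_cmult_real[symmetric])
  also have "\<dots> = integral {y..h} Fn" unfolding Fn_def by simp
  finally show ?thesis .
qed

lemma K_deriv: assumes "y \<in> {0..h}" shows "(K has_real_derivative - Fn y) (at y within {0..h})"
proof -
  have d: "((\<lambda>x. integral {0..h} Fn - integral {0..x} Fn) has_real_derivative 0 - Fn y) (at y within {0..h})"
    by (intro DERIV_diff DERIV_const integral_has_real_derivative continuous_on_subset[OF Fn_cont] assms) auto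
  have e: "integral {0..h} Fn - integral {0..x} Fn = K x" if "x \<in> {0..h}" for x
  proof -
    have "integral {0..x} Fn + integral {x..h} Fn = integral {0..h} Fn"
      using that by (intro Henstock_Kurzweil_Integration.integral_combine integrable_continuous_interval
          continuous_on_subset[OF Fn_cont]) auto
    then show ?thesis using K_int[OF that] by simp
  qed
  show ?thesis using has_field_derivative_transform_within[OF d zero_less_one assms] e by simp
qed

definition z2 :: "real \<Rightarrow> real" where "z2 y = \<zeta> (y - h)"

lemma z2_deriv: assumes "y \<in> {0..h}" shows "(z2 has_real_derivative - fF (z2 y)) (at y within {0..h})"
proof -
  have y: "y - h \<le> 0" using assms by auto
  have d1: "(\<zeta> has_real_derivative - fF (z2 y)) (at (y - h) within {..0})"
    using \<zeta>d[OF y] unfolding fF_def z2_def zz_def by simp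
  have d1': "(\<zeta> has_real_derivative - fF (z2 y)) (at ((\<lambda>y. y - h) y) within ((\<lambda>y. y - h) ` {0..h}))"
    by (rule has_field_derivative_subset[OF d1]) auto
  have d2: "((\<lambda>y. y - h) has_real_derivative 1) (at y within {0..h})"
    by (rule derivative_eq_intros refl)+ simp
  have "(\<zeta> \<circ> (\<lambda>y. y - h) has_real_derivative - fF (z2 y) * 1) (at y within {0..h})"
    by (rule DERIV_image_chain[OF d1' d2])
  then show ?thesis unfolding z2_def[abs_def] comp_def by simp
qed

lemma fF_antimono: assumes "0 \<le> w1" "w1 \<le> w2" shows "fF w2 \<le> fF w1"
proof -
  have a: "zz * exp w2 \<le> zz * exp w1" "zz * exp w1 \<le> zz"
    using assms zz_neg by (auto simp: mult_left_mono_neg)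
  define p1 where "p1 = phi t0 k (zz * exp w1)"
  define p2 where "p2 = phi t0 k (zz * exp w2)"
  have p: "p1 \<le> p2" unfolding p1_def p2_def using phi_mono a unfolding zz_def by blast
  have r1: "p1 \<in> {t0..<pi/2}" unfolding p1_def using phi_prop a unfolding zz_def by blast
  have r2: "p2 \<in> {t0..<pi/2}" unfolding p2_def using phi_prop a unfolding zz_def by (meson order_trans)
  have "sin p1 \<le> sin p2" using p r1 r2 t0 by (intro sin_monotone_2pi_le) auto
  moreover have "sin p1 > 0" using sin_pos r1 by auto
  moreover have "\<rho> * k > 0" using \<rho> k by simp
  ultimately have "\<rho> * k / sin p2 \<le> \<rho> * k / sin p1" by (intro divide_left_mono) auto
  then show ?thesis unfolding fF_def p1_def p2_def .
qed

lemma K_nonneg: "K y \<ge> 0" unfolding K_def using Jc_bounds \<rho> by simp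

lemma z2_nonneg: "y \<le> h \<Longrightarrow> z2 y \<ge> 0" unfolding z2_def by (intro \<zeta>_nonneg) simp

lemma K_z2: assumes "y \<in> {0..h}" shows "K y = z2 y"
proof -
  define Q where "Q x = (K x - z2 x)^2" for x
  define Qd where "Qd x = 2 * (K x - z2 x) * (- Fn x - - fF (z2 x))" for x
  have dQ: "(Q has_real_derivative Qd x) (at x within {0..h})" if "x \<in> {0..h}" for x
    unfolding Q_def[abs_def] Qd_def
    by (rule derivative_eq_intros K_deriv[OF that] z2_deriv[OF that] refl)+ simp
  have Qd_nonneg: "Qd x \<ge> 0" if "x \<in> {0..h}" for x
  proof -
    have "0 \<le> (K x - z2 x) * (fF (z2 x) - fF (K x))"
    proof (cases "K x \<le> z2 x")
      case True
      then have "fF (z2 x) \<le> fF (K x)" using fF_antimono K_nonneg by blast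
      then show ?thesis using True by (intro mult_nonpos_nonpos) auto
    next
      case False
      then have "fF (K x) \<le> fF (z2 x)" using fF_antimono z2_nonneg that by auto
      then show ?thesis using False by (intro mult_nonneg_nonneg) auto
    qed
    moreover have "Qd x = 2 * ((K x - z2 x) * (fF (z2 x) - fF (K x)))"
      unfolding Qd_def Fn_fF by (simp add: algebra_simps)
    ultimately show ?thesis by simp
  qed
  have Qc: "continuous_on {0..h} Q" using dQ by (intro DERIV_continuous_on) auto
  have "Q y \<le> Q h"
  proof (rule DERIV_nonneg_imp_increasing_open[of y h Q])
    show "y \<le> h" using assms by simp
    show "continuous_on {y..h} Q" using assms by (intro continuous_on_subset[OF Qc]) auto
    fix x assume x: "y < x" "x < h"
    then have xi: "x \<in> interior {0..h}" using assms by auto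
    have "(Q has_real_derivative Qd x) (at x)"
      using dQ[of x] x assms at_within_interior[OF xi] by auto
    then show "\<exists>D. (Q has_real_derivative D) (at x) \<and> 0 \<le> D" using Qd_nonneg[of x] x assms by auto
  qed
  moreover have "Q h = 0" unfolding Q_def K_def z2_def using Jc_ge_h[of h] \<zeta>0 by simp
  ultimately have "Q y \<le> 0" by simp
  then show ?thesis unfolding Q_def by simp
qed

lemma T_\<theta>hat: assumes "y \<in> {0..h}" shows "T y = phi t0 k ((exp (-k) - 1) * exp (\<zeta> (y - h)))"
  using K_z2[OF assms] unfolding T_def K_def z2_def zz_def by simp

end

theorem mainTheorem6:
  fixes \<theta>0 L \<kappa> \<rho> hbar hstar :: real
    and \<zeta> \<theta>hat Istar \<theta>star :: "real \<Rightarrow> real"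
  assumes "0 < \<theta>0" "\<theta>0 < pi/2" "L > 0" "\<kappa> > 0" "\<rho> > 0"
    and "\<zeta> 0 = 0"
    and "\<And>t. t \<le> 0 \<Longrightarrow> (\<zeta> has_real_derivative
            (- \<rho> * \<kappa> / sin (phi \<theta>0 \<kappa> ((exp (-\<kappa>) - 1) * exp (\<zeta> t))))) (at t within {..0})"
    and "\<And>t. t \<le> 0 \<Longrightarrow> \<theta>hat t = phi \<theta>0 \<kappa> ((exp (-\<kappa>) - 1) * exp (\<zeta> t))"
    and "hbar > 0"
    and "integral {-hbar..0} (\<lambda>t. 1 / sin (\<theta>hat t)) = L"
    and "competitive_equilibrium \<theta>0 L \<kappa> \<rho> Istar hstar \<theta>star"
  shows "hstar = hbar \<and>
         (AE y in lebesgue. y \<in> {0..hbar} \<longrightarrow> \<theta>star y = \<theta>hat (y - hbar))"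
proof -
  interpret EZ \<theta>0 \<kappa> L \<rho> Istar \<theta>star hstar \<zeta>
    by unfold_locales (use assms in auto)
  have Th: "T y = \<theta>hat (y - hstar)" if "y \<in> {0..hstar}" for y
    using T_\<theta>hat[OF that] assms(8)[of "y - hstar"] that by simp
  define P where "P t = 1 / sin (\<theta>hat t)" for t
  have arg: "(exp (-\<kappa>) - 1) * exp (\<zeta> t) \<le> exp (-\<kappa>) - 1" if "t \<le> 0" for t
    using \<zeta>_nonneg[OF that] assms(4) by (simp add: mult_le_cancel_left1)
  have hr: "\<theta>hat t \<in> {\<theta>0..<pi/2}" if "t \<le> 0" for t
    using phi_prop(1)[OF arg[OF that]] assms(8)[OF that] by simp
  have P1: "P t \<ge> 1" if "t \<le> 0" for t
    unfolding P_def using inv_sin_bounds[of "\<theta>hat t"] hr[OF that] by auto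
  have Pint: "P integrable_on {a..0}" for a
  proof (cases "a \<le> 0")
    case False then show ?thesis by (simp add: integrable_on_empty)
  next
    case True
    have cz: "continuous_on {a..0} \<zeta>" by (rule continuous_on_subset[OF \<zeta>_cont]) auto
    have ne: "{a..0} \<noteq> {}" using True by simp
    obtain tm where tm0: "tm \<in> {a..0}" "\<forall>t\<in>{a..0}. \<zeta> t \<le> \<zeta> tm"
      using continuous_attains_sup[OF compact_Icc ne cz] by blast
    have tm: "tm \<in> {a..0}" "\<And>t. t \<in> {a..0} \<Longrightarrow> \<zeta> t \<le> \<zeta> tm" using tm0 by auto
    define M where "M = \<zeta> tm"
    have M0: "0 \<le> M" unfolding M_def using \<zeta>_nonneg tm by auto
    define lo where "lo = (exp (-\<kappa>) - 1) * exp M"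
    have lo: "lo \<le> exp (-\<kappa>) - 1" unfolding lo_def using M0 assms(4) by (simp add: mult_le_cancel_left1)
    have rng: "(\<lambda>t. (exp (-\<kappa>) - 1) * exp (\<zeta> t)) ` {a..0} \<subseteq> {lo..exp (-\<kappa>) - 1}"
    proof
      fix x assume "x \<in> (\<lambda>t. (exp (-\<kappa>) - 1) * exp (\<zeta> t)) ` {a..0}"
      then obtain t where t: "t \<in> {a..0}" "x = (exp (-\<kappa>) - 1) * exp (\<zeta> t)" by blast
      have "exp (\<zeta> t) \<le> exp M" using tm(2)[OF t(1)] unfolding M_def by simp
      then have "lo \<le> x" unfolding lo_def t(2) using assms(4) by (simp add: mult_left_mono_neg)
      moreover have "x \<le> exp (-\<kappa>) - 1" using arg[of t] t by auto
      ultimately show "x \<in> {lo..exp (-\<kappa>) - 1}" by simp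
    qed
    have c1: "continuous_on {a..0} (\<lambda>t. (exp (-\<kappa>) - 1) * exp (\<zeta> t))"
      by (intro continuous_intros continuous_on_subset[OF \<zeta>_cont]) auto
    have c2: "continuous_on {a..0} (\<lambda>t. phi \<theta>0 \<kappa> ((exp (-\<kappa>) - 1) * exp (\<zeta> t)))"
      by (rule continuous_on_compose2[OF phi_cont[OF lo] c1 rng])
    have c3: "continuous_on {a..0} \<theta>hat"
      by (rule continuous_on_eq[OF c2]) (use assms(8) in auto)
    have "sin (\<theta>hat t) \<noteq> 0" if "t \<in> {a..0}" for t
      using sin_pos[of "\<theta>hat t"] hr[of t] that by (simp add: less_imp_neq[THEN not_sym])
    then have "continuous_on {a..0} P" unfolding P_def by (intro continuous_intros c3) auto
    then show ?thesis by (rule integrable_continuous_interval)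
  qed
  have Lh: "integral {-hstar..0} P = L"
  proof -
    have "L = integral {0..hstar} (\<lambda>y. 1 / sin (\<theta>star y))" using inv_L by simp
    also have "\<dots> = integral {0..hstar} (\<lambda>y. 1 / sin (T y))"
    proof (rule integral_spike[OF negl])
      fix y assume "y \<in> {0..hstar} - {y. y \<in> {0..hstar} \<and> \<theta>star y \<noteq> T y}"
      then show "1 / sin (T y) = 1 / sin (\<theta>star y)" by auto
    qed
    also have "\<dots> = integral {0..hstar} (\<lambda>y. P (y + - hstar))"
      by (rule Henstock_Kurzweil_Integration.integral_cong) (use Th in \<open>auto simp: P_def\<close>)
    also have "\<dots> = integral {-hstar..0} P"
      using integral_shift_real_ivl[of "-hstar" "-hstar" 0 P] by simp
    finally show ?thesis by simp
  qed
  have Lb: "integral {-hbar..0} P = L" using assms(10) unfolding P_def .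
  have cmp: "integral {a2..0} P + (a2 - a1) \<le> integral {a1..0} P" if "a1 \<le> a2" "a2 \<le> 0" for a1 a2
  proof -
    have "integral {a1..a2} P + integral {a2..0} P = integral {a1..0} P"
      using that by (intro Henstock_Kurzweil_Integration.integral_combine Pint) auto
    moreover have "integral {a1..a2} (\<lambda>t. 1) \<le> integral {a1..a2} P"
      using that P1 by (intro integral_le integrable_on_subinterval[OF Pint[of a1]]) auto
    ultimately show ?thesis using that by simp
  qed
  have hh: "hstar = hbar"
  proof (rule ccontr)
    assume "hstar \<noteq> hbar"
    then consider "hstar < hbar" | "hbar < hstar" by linarith
    then show False
    proof cases
      case 1
      then show False using cmp[of "-hbar" "-hstar"] h_pos Lh Lb by simp
    next
      case 2
      then show False using cmp[of "-hstar" "-hbar"] assms(9) Lh Lb by simp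
    qed
  qed
  have "AE y in lebesgue. y \<in> {0..hbar} \<longrightarrow> \<theta>star y = \<theta>hat (y - hbar)"
    using AE_T by (rule AE_mp) (use Th hh in \<open>auto intro!: AE_I2\<close>)
  then show ?thesis using hh by simp
qed


end
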